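(* Let $M\ge 2$ be an integer. Consider the $M-1$ identifiers $\mathbf{r}^{(k)}=(r^{(k)}_1,\dots,r^{(k)}_M)$, $k=0,1,\dots,M-2$, of the group whose anchor position is $1$: $r^{(k)}_1=0$, and $(r^{(k)}_2,\dots,r^{(k)}_M)$ is the cyclic right shift by $k$ positions of $(1,2,\dots,M-1)$ (so $\mathbf{r}^{(0)}=(0,1,2,\dots,M-1)$, $\mathbf{r}^{(1)}=(0,M-1,1,2,\dots,M-2)$, $\dots$, $\mathbf{r}^{(M-2)}=(0,2,3,\dots,M-1,1)$). Then the $(M-1)\times M$ integer matrix whose $k$-th row is the coefficient vector $\big(2^{\,r_{\max}-r^{(k)}_1},\dots,2^{\,r_{\max}-r^{(k)}_M}\big)$ with $r_{\max}=M-1$ has rank $M-1$ (over $\mathbb{Q}$).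
   Context: A batch of $M$ data packets $c_1,\dots,c_M$ is encoded as follows: an encoded packet is specified by an identifier $(r_1,\dots,r_M)$ of nonnegative integers; each packet $c_m$ is padded with $r_m$ zero bits at its head (and zeros at its tail so all have equal length), which in ordinary integer arithmetic amounts to forming $2^{r_{\max}-r_m}c_m$ with $r_{\max}=\max_m r_m$, and the padded packets are XORed. The coefficient vector of the encoded packet is $(2^{r_{\max}-r_1},\dots,2^{r_{\max}-r_M})$, and ranks of collections of encoded packets are ranks of the matrices formed by these coefficient vectors, computed in ordinary (rational) arithmetic. In the first-round construction, the identifiers are the bijections $\{1,\dots,M\}\to\{0,1,\dots,M-1\}$ arranged into $M$ groups: the group with anchor position $g$ consists of the $M-1$ identifiers with $r_g=0$ whose entries at the positions other than $g$, read in increasing order of position, form the cyclic right shifts by $k=0,1,\dots,M-2$ of $(1,2,\dots,M-1)$. *)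

theory Defs
  imports "Jordan_Normal_Form.DL_Rank"
begin

text \<open>Identifier entries (0-indexed): row k (0 \<le> k \<le> M-2), position j (0 \<le> j \<le> M-1).
  Position 0 is the anchor (value 0); positions 1..M-1 hold the cyclic right shift by k
  of the list (1,2,...,M-1).\<close>
definition ident :: "nat \<Rightarrow> nat \<Rightarrow> nat \<Rightarrow> nat" where
  "ident M k j = (if j = 0 then 0
     else nat ((int (j - 1) - int k) mod int (M - 1)) + 1)"

definition coeff_mat :: "nat \<Rightarrow> rat mat" where
  "coeff_mat M = mat (M - 1) M (\<lambda>(k, j). 2 ^ (M - 1 - ident M k j))"

end

theory Submission
  imports Defs
begin

definition cc :: "nat \<Rightarrow> nat \<Rightarrow> nat \<Rightarrow> rat" where
  "cc n k j = 2 ^ (n - 1 - nat ((int j - int k) mod int n))"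

lemma g_inj:
  assumes "k < n"
  shows "inj_on (\<lambda>j. nat ((int j - int k) mod int n)) {..<n}"
proof (rule inj_onI)
  fix a b assume a: "a \<in> {..<n}" and b: "b \<in> {..<n}"
    and e: "nat ((int a - int k) mod int n) = nat ((int b - int k) mod int n)"
  have "(int a - int k) mod int n = (int b - int k) mod int n"
    using e assms by (simp add: eq_nat_nat_iff)
  then have "int n dvd (int a - int k) - (int b - int k)"
    by (simp add: mod_eq_dvd_iff)
  then have "int n dvd int a - int b" by simp
  moreover have "\<bar>int a - int b\<bar> < int n" using a b by auto
  ultimately show "a = b"
  proof -
    note h = \<open>int n dvd int a - int b\<close> \<open>\<bar>int a - int b\<bar> < int n\<close>
    show ?thesis
  proof (rule ccontr)
    assume "a \<noteq> b"
    then have "int a - int b \<noteq> 0" by simp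
    with \<open>int n dvd int a - int b\<close> have "int n \<le> \<bar>int a - int b\<bar>"
      using dvd_imp_le_int[of "int a - int b" "int n"] by simp
    with \<open>\<bar>int a - int b\<bar> < int n\<close> show False by simp
  qed
  qed
qed

lemma g_img:
  assumes "k < n"
  shows "(\<lambda>j. nat ((int j - int k) mod int n)) ` {..<n} = {..<n}"
proof (rule endo_inj_surj)
  show "(\<lambda>j. nat ((int j - int k) mod int n)) ` {..<n} \<subseteq> {..<n}"
    using assms by (auto simp: nat_less_iff)
qed (use g_inj[OF assms] in auto)

lemma cc_sum:
  assumes "k < n"
  shows "(\<Sum>j<n. cc n k j) = 2 ^ n - 1"
proof -
  have "(\<Sum>j<n. cc n k j) = (\<Sum>i\<in>(\<lambda>j. nat ((int j - int k) mod int n)) ` {..<n}. (2::rat) ^ (n - 1 - i))"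
    unfolding cc_def by (subst sum.reindex[OF g_inj[OF assms]]) simp
  also have "\<dots> = (\<Sum>i<n. (2::rat) ^ (n - Suc i))" by (simp add: g_img[OF assms])
  also have "\<dots> = (\<Sum>i<n. (2::rat) ^ i)" by (rule sum.nat_diff_reindex)
  also have "\<dots> = 2 ^ n - 1"
    by (induction n) (simp_all add: algebra_simps)
  finally show ?thesis .
qed

lemma cc_diag: "k < n \<Longrightarrow> cc n k k = 2 ^ (n - 1)"
  by (simp add: cc_def)

lemma core:
  fixes x :: "nat \<Rightarrow> rat"
  assumes n: "n \<ge> 1" and eq: "\<And>k. k < n \<Longrightarrow> (\<Sum>j<n. cc n k j * x j) = 0"
  shows "\<forall>j<n. x j = 0"
proof -
  have fin: "finite ((\<lambda>j. \<bar>x j\<bar>) ` {..<n})" by simp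
  have ne: "(\<lambda>j. \<bar>x j\<bar>) ` {..<n} \<noteq> {}" using n by (simp add: lessThan_empty_iff)
  obtain k where k: "k < n" "\<bar>x k\<bar> = Max ((\<lambda>j. \<bar>x j\<bar>) ` {..<n})"
    using Max_in[OF fin ne] by auto
  have mx: "\<And>j. j < n \<Longrightarrow> \<bar>x j\<bar> \<le> \<bar>x k\<bar>" using k(2) fin by auto
  have pos: "\<And>j. cc n k j > 0" by (simp add: cc_def)
  have split: "(\<Sum>j<n. cc n k j * x j) = cc n k k * x k + (\<Sum>j\<in>{..<n}-{k}. cc n k j * x j)"
    using k(1) by (simp add: sum.remove)
  have split2: "(\<Sum>j<n. cc n k j) = cc n k k + (\<Sum>j\<in>{..<n}-{k}. cc n k j)"
    using k(1) by (simp add: sum.remove)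
  have "2 ^ (n - 1) * \<bar>x k\<bar> = \<bar>cc n k k * x k\<bar>" using k(1) by (simp add: cc_diag abs_mult)
  also have "\<dots> = \<bar>\<Sum>j\<in>{..<n}-{k}. cc n k j * x j\<bar>" using split eq[OF k(1)] by simp
  also have "\<dots> \<le> (\<Sum>j\<in>{..<n}-{k}. \<bar>cc n k j * x j\<bar>)" by (rule sum_abs)
  also have "\<dots> \<le> (\<Sum>j\<in>{..<n}-{k}. cc n k j * \<bar>x k\<bar>)"
    apply (rule sum_mono) using pos mx by (simp add: abs_mult less_imp_le mult_left_mono)
  also have "\<dots> = (\<Sum>j\<in>{..<n}-{k}. cc n k j) * \<bar>x k\<bar>" by (simp add: sum_distrib_right)
  also have "\<dots> = (2 ^ n - 1 - 2 ^ (n - 1)) * \<bar>x k\<bar>"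
    using split2 cc_sum[OF k(1)] cc_diag[OF k(1)] by simp
  also have "\<dots> = (2 ^ (n - 1) - 1) * \<bar>x k\<bar>"
  proof -
    have "(2::rat) ^ n = 2 * 2 ^ (n - 1)" using n by (metis Suc_diff_le diff_Suc_1 power_Suc)
    then show ?thesis by simp
  qed
  finally have "\<bar>x k\<bar> \<le> 0" by (simp add: algebra_simps)
  then have "x k = 0" by simp
  then show ?thesis using mx by fastforce
qed

lemma rank_upper:
  fixes A :: "rat mat"
  assumes "A \<in> carrier_mat n nc"
  shows "vec_space.rank n A \<le> n"
proof -
  interpret vec_space "TYPE(rat)" n .
  have d: "dim_row A = n" using assms by (rule carrier_matD(1))
  have sub0: "set (cols A) \<subseteq> carrier_vec n" using cols_dim[of A] unfolding d .
  have "subspace class_ring (span (set (cols A))) V"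
    by (rule span_is_subspace[OF sub0])
  from subspace_dim[OF this fin_dim fin_dim_span_cols[OF assms]]
  show ?thesis unfolding rank_def dim_is_n .
qed

theorem lemma1:
  fixes M :: nat
  assumes "M \<ge> 2"
  shows "vec_space.rank (M - 1) (coeff_mat M) = M - 1"
proof -
  define n where "n = M - 1"
  have n1: "n \<ge> 1" using assms n_def by simp
  interpret vec_space "TYPE(rat)" n .
  define A where "A = coeff_mat M"
  have A: "A \<in> carrier_mat n M" unfolding A_def coeff_mat_def n_def by simp
  define B where "B = mat n n (\<lambda>(k, j). cc n k j)"
  have B: "B \<in> carrier_mat n n" unfolding B_def by simp
  have Bcol: "\<And>j. j < n \<Longrightarrow> col B j = col A (j + 1)"
  proof -
    fix j assume j: "j < n"
    show "col B j = col A (j + 1)"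
    proof (rule eq_vecI)
      show "dim_vec (col B j) = dim_vec (col A (j + 1))" using A B by simp
      fix k assume "k < dim_vec (col A (j + 1))"
      then have k: "k < n" using A by simp
      have jM: "j + 1 < M" using j n_def by simp
      have kM: "k < M - 1" using k n_def by simp
      have 1: "col B j $ k = cc n k j" using j k unfolding B_def by simp
      have 2: "col A (j + 1) $ k = 2 ^ (M - 1 - ident M k (j + 1))"
        using jM kM unfolding A_def coeff_mat_def by simp
      have 3: "ident M k (j + 1) = nat ((int j - int k) mod int n) + 1"
        unfolding ident_def n_def by simp
      show "col B j $ k = col A (j + 1) $ k"
        unfolding 1 2 3 cc_def n_def by (simp add: diff_diff_add)
    qed
  qed
  have detB: "det B \<noteq> 0"
  proof
    assume "det B = 0"
    then obtain v where v: "v \<in> carrier_vec n" "v \<noteq> 0\<^sub>v n" "B *\<^sub>v v = 0\<^sub>v n"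
      using det_0_iff_vec_prod_zero_field[OF B] by auto
    have "\<And>k. k < n \<Longrightarrow> (\<Sum>j<n. cc n k j * v $ j) = 0"
    proof -
      fix k assume k: "k < n"
      have "(B *\<^sub>v v) $ k = 0" using v(3) k by simp
      moreover have "(B *\<^sub>v v) $ k = row B k \<bullet> v" using k B by simp
      moreover have "row B k \<bullet> v = (\<Sum>j\<in>{0..<n}. row B k $ j * v $ j)"
        using v(1) unfolding scalar_prod_def by simp
      moreover have "\<And>j. j \<in> {0..<n} \<Longrightarrow> row B k $ j = cc n k j"
        using k unfolding B_def by simp
      ultimately show "(\<Sum>j<n. cc n k j * v $ j) = 0"
        by (simp add: atLeast0LessThan)
    qed
    from core[OF n1 this] have "v = 0\<^sub>v n"
      using v(1) by (intro eq_vecI) auto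
    with v(2) show False by simp
  qed
  have rB: "rank B = n" using det_rank_iff[OF B] detB by simp
  have dB: "distinct (cols B)"
    using non_distinct_low_rank[OF B] rB by auto
  have liB: "lin_indpt (set (cols B))" using full_rank_lin_indpt[OF B rB dB] .
  have subB: "set (cols B) \<subseteq> set (cols A)"
  proof
    fix c assume "c \<in> set (cols B)"
    then obtain j where j: "j < n" "c = col B j" using B
      by (auto simp: in_set_conv_nth)
    then have "c = col A (j + 1)" using Bcol by simp
    moreover have "j + 1 < M" using j n_def by simp
    ultimately show "c \<in> set (cols A)" using A
      by (auto simp: in_set_conv_nth intro!: exI[of _ "j + 1"])
  qed
  have "card (set (cols B)) = n" using distinct_card[OF dB] B by simp
  then have "n \<le> rank A" using rank_ge_card_indpt[OF A subB liB] by simp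
  moreover have "rank A \<le> n" using rank_upper[OF A] .
  ultimately show ?thesis unfolding A_def n_def by simp
qed

end
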